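(* Let $a$ and $b$ be relatively prime integers with $1<a<b$, let $(u,v)$ be the definitely least solution of $ax+by=1$, and let $S=\langle a,b\rangle$. Then $\#T(S)=|uv|$.
   Context: $\langle a,b\rangle=\{\lambda_1a+\lambda_2b:\lambda_1,\lambda_2\in\mathbb{N}\}$ with $\mathbb{N}$ the nonnegative integers. $F(S)$ is the largest integer not in $S$; $N(S)=\{s\in S:s<F(S)\}$ and $T(S)=\{s\in N(S): s-1\notin S\text{ and }s+1\notin S\}$. The definitely least solution $(u,v)$ of $ax+by=1$ is the unique integer solution with both $|u|$ and $|v|$ minimal; equivalently the solution with $|u|\le b/2$, $|v|\le a/2$. *)

theory Defs
  imports Main
begin

definition gen2 :: "int \<Rightarrow> int \<Rightarrow> int set" where
  "gen2 a b = {int l1 * a + int l2 * b | l1 l2. True}"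

definition frob :: "int set \<Rightarrow> int" where
  "frob S = (GREATEST x. x \<notin> S)"

definition Nset :: "int set \<Rightarrow> int set" where
  "Nset S = {s \<in> S. s < frob S}"

definition Tset :: "int set \<Rightarrow> int set" where
  "Tset S = {s \<in> Nset S. s - 1 \<notin> S \<and> s + 1 \<notin> S}"

definition def_least_sol :: "int \<Rightarrow> int \<Rightarrow> int \<Rightarrow> int \<Rightarrow> bool" where
  "def_least_sol a b u v \<longleftrightarrow> a * u + b * v = 1 \<and>
     (\<forall>x y. a * x + b * y = 1 \<longrightarrow> \<bar>u\<bar> \<le> \<bar>x\<bar> \<and> \<bar>v\<bar> \<le> \<bar>y\<bar>)"

end

theory Submission
  imports Defs
begin

lemma gen2_swap: "gen2 a b = gen2 b a"
  unfolding gen2_def by (auto, (metis add.commute)+)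

lemma rep_mem:
  fixes a b x y n :: int
  assumes cop: "coprime a b" and a0: "0 < a" and x0: "0 \<le> x" and xb: "x < b"
    and n: "n = a*x + b*y"
  shows "n \<in> gen2 a b \<longleftrightarrow> 0 \<le> y"
proof
  assume "n \<in> gen2 a b"
  then obtain l1 l2 :: nat where nl: "n = int l1 * a + int l2 * b" by (auto simp: gen2_def)
  have e: "a * (int l1 - x) = b * (y - int l2)" using nl n by (simp add: algebra_simps)
  hence "b dvd a * (int l1 - x)" by (metis dvd_triv_left)
  hence "b dvd (int l1 - x)" using cop by (metis coprime_commute coprime_dvd_mult_right_iff)
  then obtain k where k: "int l1 - x = b * k" by (auto elim: dvdE)
  have b0: "b > 0" using x0 xb by simp
  have "k \<ge> 0"
  proof (rule ccontr)
    assume "\<not> k \<ge> 0"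
    hence "k \<le> -1" by simp
    hence "b * k \<le> b * (-1)" using b0 by (intro mult_left_mono) auto
    thus False using k xb by simp
  qed
  have "b * (a * k) = b * (y - int l2)" using e k by (simp add: algebra_simps)
  hence "a * k = y - int l2" using b0 by simp
  moreover have "a * k \<ge> 0" using a0 \<open>k \<ge> 0\<close> by simp
  ultimately show "0 \<le> y" by simp
next
  assume "0 \<le> y"
  thus "n \<in> gen2 a b" unfolding gen2_def using n x0
    by (intro CollectI exI[of _ "nat x"] exI[of _ "nat y"]) (simp add: algebra_simps)
qed

lemma rep_ex:
  fixes a b u v n :: int
  assumes eq: "a*u + b*v = 1" and b0: "0 < b"
  shows "\<exists>x y. 0 \<le> x \<and> x < b \<and> n = a*x + b*y"
proof -
  define q where "q = (n*u) div b"
  define r where "r = (n*u) mod b"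
  have hq: "n*u = b * q + r" unfolding q_def r_def by simp
  have "n = n * (a*u + b*v)" using eq by simp
  also have "\<dots> = a * (n*u) + b * (n*v)" by (simp add: algebra_simps)
  also have "\<dots> = a * (b * q + r) + b * (n*v)" using hq by simp
  finally have "n = a * r + b * (n*v + a * q)" by (simp add: algebra_simps)
  moreover have "0 \<le> r" "r < b" using b0 unfolding r_def by auto
  ultimately show ?thesis by blast
qed

lemma notin_le:
  fixes a b u v n :: int
  assumes cop: "coprime a b" and a0: "0 < a" and b0: "1 < b" and eq: "a*u + b*v = 1"
    and nS: "n \<notin> gen2 a b"
  shows "n \<le> a*b - a - b"
proof -
  obtain x y where xy: "0 \<le> x" "x < b" "n = a*x + b*y"
    using rep_ex[OF eq, of n] b0 by auto
  have "y < 0" using rep_mem[OF cop a0 xy] nS by simp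
  hence "b*y \<le> b*(-1)" using b0 by (intro mult_left_mono) auto
  moreover have "a*x \<le> a*(b-1)" using a0 xy by (intro mult_left_mono) auto
  ultimately show "n \<le> a*b - a - b" using xy by (simp add: algebra_simps)
qed

lemma frob_val:
  fixes a b u v :: int
  assumes cop: "coprime a b" and a0: "0 < a" and b0: "1 < b" and eq: "a*u + b*v = 1"
  shows "frob (gen2 a b) = a*b - a - b"
  unfolding frob_def
proof (rule Greatest_equality)
  have e: "a*b - a - b = a*(b-1) + b*(-1)" by (simp add: algebra_simps)
  show "a*b - a - b \<notin> gen2 a b" using rep_mem[OF cop a0 _ _ e] b0 by simp
next
  fix n assume nS: "n \<notin> gen2 a b"
  obtain x y where xy: "0 \<le> x" "x < b" "n = a*x + b*y"
    using rep_ex[OF eq, of n] b0 by auto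
  have "y < 0" using rep_mem[OF cop a0 xy] nS by simp
  hence "b*y \<le> b*(-1)" using b0 by (intro mult_left_mono) auto
  moreover have "a*x \<le> a*(b-1)" using a0 xy by (intro mult_left_mono) auto
  ultimately show "n \<le> a*b - a - b" using xy by (simp add: algebra_simps)
qed

lemma main_pos:
  fixes a b u v :: int
  assumes cop: "coprime a b" and a1: "1 < a" and b1: "1 < b" and eq: "a*u + b*v = 1"
    and u0: "0 < u" and v0: "v < 0" and hu: "u \<le> b - u" and hv: "- v \<le> a + v"
  shows "int (card (Tset (gen2 a b))) = u * (- v)"
proof -
  define S where "S = gen2 a b"
  define w where "w = - v"
  have a0: "0 < a" using a1 by simp
  have w0: "0 < w" using v0 w_def by simp
  have eqw: "a*u = 1 + b*w" using eq w_def by (simp add: algebra_simps)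
  have fr: "frob S = a*b - a - b" unfolding S_def using frob_val[OF cop a0 b1 eq] .
  have below: "s < frob S" if "s + 1 \<notin> S" for s
  proof -
    have "s + 1 \<le> a*b - a - b" using notin_le[OF cop a0 b1 eq] that S_def by blast
    thus ?thesis using fr by simp
  qed
  have T: "Tset S = (\<lambda>(x,y). a*x + b*y) ` ({0..<u} \<times> {0..<w})"
  proof (rule set_eqI, rule iffI)
    fix s assume sT: "s \<in> Tset S"
    hence sS: "s \<in> S" and sm: "s - 1 \<notin> S" and sp: "s + 1 \<notin> S"
      unfolding Tset_def Nset_def by auto
    obtain x y where xy: "0 \<le> x" "x < b" "s = a*x + b*y"
      using rep_ex[OF eq, of s] b1 by auto
    have y0: "0 \<le> y" using rep_mem[OF cop a0 xy] sS S_def by simp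
    have xu: "x < u"
    proof (rule ccontr)
      assume "\<not> x < u"
      hence h: "0 \<le> x - u" "x - u < b" using xy u0 by auto
      have e: "s - 1 = a*(x-u) + b*(y+w)" using xy eqw by (simp add: algebra_simps)
      have "s - 1 \<in> S" using rep_mem[OF cop a0 h e] y0 w0 S_def by simp
      thus False using sm by simp
    qed
    have yw: "y < w"
    proof (rule ccontr)
      assume "\<not> y < w"
      hence h: "0 \<le> x + u" "x + u < b" using xy u0 xu hu by auto
      have e: "s + 1 = a*(x+u) + b*(y-w)" using xy eqw by (simp add: algebra_simps)
      have "s + 1 \<in> S" using rep_mem[OF cop a0 h e] \<open>\<not> y < w\<close> S_def by simp
      thus False using sp by simp
    qed
    show "s \<in> (\<lambda>(x,y). a*x + b*y) ` ({0..<u} \<times> {0..<w})"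
      by (rule image_eqI[of _ _ "(x,y)"]) (use xy xu y0 yw in auto)
  next
    fix s assume "s \<in> (\<lambda>(x,y). a*x + b*y) ` ({0..<u} \<times> {0..<w})"
    then obtain x y where xy: "0 \<le> x" "x < u" "0 \<le> y" "y < w" "s = a*x + b*y" by auto
    have h0: "0 \<le> x" "x < b" using xy hu by auto
    have sS: "s \<in> S" using rep_mem[OF cop a0 h0 xy(5)] xy S_def by simp
    have h1: "0 \<le> x + u" "x + u < b" using xy u0 hu by auto
    have e1: "s + 1 = a*(x+u) + b*(y-w)" using xy eqw by (simp add: algebra_simps)
    have sp: "s + 1 \<notin> S" using rep_mem[OF cop a0 h1 e1] xy S_def by simp
    have h2: "0 \<le> x - u + b" "x - u + b < b" using xy u0 hu by auto
    have e2: "s - 1 = a*(x-u+b) + b*(y+w-a)" using xy eqw by (simp add: algebra_simps)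
    have sm: "s - 1 \<notin> S" using rep_mem[OF cop a0 h2 e2] xy hv w_def S_def by simp
    show "s \<in> Tset S" unfolding Tset_def Nset_def using sS sp sm below[OF sp] by simp
  qed
  have inj: "inj_on (\<lambda>(x,y). a*x + b*y) ({0..<u} \<times> {0..<w})"
  proof (rule inj_onI, clarsimp)
    fix x y x' y' :: int
    assume r: "0 \<le> x" "x < u" "0 \<le> y" "y < w" "0 \<le> x'" "x' < u" "0 \<le> y'" "y' < w"
      and e: "a*x + b*y = a*x' + b*y'"
    have "a*(x - x') = b*(y' - y)" using e by (simp add: algebra_simps)
    hence "b dvd a*(x - x')" by (metis dvd_triv_left)
    hence d: "b dvd (x - x')" using cop by (metis coprime_commute coprime_dvd_mult_right_iff)
    have xx: "x = x'"
    proof (rule ccontr)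
      assume "x \<noteq> x'"
      hence "\<bar>b\<bar> \<le> \<bar>x - x'\<bar>" using d dvd_imp_le_int by simp
      thus False using r hu b1 by simp
    qed
    moreover have "y = y'" using e xx b1 by simp
    ultimately show "x = x' \<and> y = y'" by simp
  qed
  have "card (Tset S) = card ({0..<u} \<times> {0..<w})"
    using T inj card_image by metis
  also have "\<dots> = nat u * nat w" by (simp add: card_cartesian_product)
  finally show ?thesis using u0 w0 S_def w_def by simp
qed

theorem lemma3p3:
  fixes a b u v :: int
  assumes "coprime a b" and "1 < a" and "a < b"
    and "def_least_sol a b u v"
  shows "int (card (Tset (gen2 a b))) = \<bar>u * v\<bar>"
proof -
  have eq: "a*u + b*v = 1" using assms(4) unfolding def_least_sol_def by simp
  have m1: "\<bar>u\<bar> \<le> \<bar>u - b\<bar> \<and> \<bar>v\<bar> \<le> \<bar>v + a\<bar>"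
  proof -
    have "a*(u-b) + b*(v+a) = 1" using eq by (simp add: algebra_simps)
    thus ?thesis using assms(4) unfolding def_least_sol_def by blast
  qed
  have m2: "\<bar>u\<bar> \<le> \<bar>u + b\<bar> \<and> \<bar>v\<bar> \<le> \<bar>v - a\<bar>"
  proof -
    have "a*(u+b) + b*(v-a) = 1" using eq by (simp add: algebra_simps)
    thus ?thesis using assms(4) unfolding def_least_sol_def by blast
  qed
  have b1: "1 < b" using assms by simp
  have u0: "u \<noteq> 0"
  proof
    assume "u = 0" hence "b*v = 1" using eq by simp
    thus False using b1 pos_zmult_eq_1_iff[of b v] by simp
  qed
  show ?thesis
  proof (cases "u > 0")
    case True
    have "a*u \<ge> a" using True assms(2) by simp
    hence "b*v < 0" using eq assms(2) by linarith
    hence v0: "v < 0" using b1 by (simp add: mult_less_0_iff)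
    have hu: "u \<le> b - u" using m1 True b1 by (simp add: abs_if split: if_splits)
    have hv: "- v \<le> a + v" using m1 v0 assms(2) by (simp add: abs_if split: if_splits)
    have "int (card (Tset (gen2 a b))) = u * (- v)"
      using main_pos[OF assms(1) assms(2) b1 eq True v0 hu hv] .
    thus ?thesis using True v0 by (simp add: abs_mult)
  next
    case False
    hence uneg: "u < 0" using u0 by simp
    have "a*u < 0" using uneg assms(2) by (simp add: mult_pos_neg)
    hence "b*v > 0" using eq by linarith
    hence v0: "v > 0" using b1 by (simp add: zero_less_mult_iff)
    have hv: "v \<le> a - v" using m2 v0 assms(2) by (simp add: abs_if split: if_splits)
    have hu: "- u \<le> b + u" using m2 uneg b1 by (simp add: abs_if split: if_splits)
    have eq': "b*v + a*u = 1" using eq by simp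
    have "int (card (Tset (gen2 b a))) = v * (- u)"
      using main_pos[OF _ b1 assms(2) eq' v0 uneg hv hu] assms(1)
      by (simp add: coprime_commute)
    thus ?thesis using uneg v0 gen2_swap[of a b] by (simp add: abs_mult)
  qed
qed

end
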